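(* Let $\mathrm{BS}$ be the Biggs-Smith graph and let $A=\{1a,\dots,17a\}$, $B=\{1b,\dots,17b\}$, $C$, $D$, $E$, $F$ be defined analogously, and $H_i=\{ia,ib,ic,id,ie,if\}$. The automorphisms of $\mathrm{BS}$ that preserve the partition of $V(\mathrm{BS})$ into $A,B,C,D,E,F$ (i.e. map each part onto a part) correspond to permutations of the sets $H_i$, $i\in[17]$. They are in bijective correspondence with the permutations of $[17]$ that can be written uniquely as a product $\alpha\phi_k$ of a dihedral permutation $\alpha\in D_{17}$ (acting on $[17]$ viewed as $\mathbb{Z}_{17}$ in cyclic order) and a permutation $\phi_k:i\mapsto ki \pmod{17}$ with $k\in\{1,2,4,8\}$ (where $0$ is written as $17$). The automorphism corresponding to $\alpha\phi_k$ maps each of $A,\dots,F$ to itself if $k=1$, interchanges $A$ with $B$ and $C$ with $D$ if $k=4$, and interchanges $E$ with $F$ (and $\{A,B\}$ with $\{C,D\}$) if $k=2$ or $k=8$.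
   Context: The Biggs-Smith graph $\mathrm{BS}$ is the cubic graph on the $102$ vertices $ia,ib,ic,id,ie,if$ for $i\in\{1,\dots,17\}$ (indices taken modulo 17, with $0$ written as $17$), whose edges are: $ie\,ia$, $ie\,ib$, $ie\,if$, $if\,ic$, $if\,id$ for each $i$; and $ia\,(i+1)a$, $ib\,(i+4)b$, $ic\,(i+2)c$, $id\,(i+8)d$ for each $i$. $D_{17}$ denotes the dihedral group of order 34 acting on $\mathbb{Z}_{17}$ by maps $i\mapsto \pm i+c$. *)

theory Defs
  imports Main "HOL-Library.Numeral_Type"
begin

text \<open>Vertex labels ia,...,if of the Biggs-Smith graph. The index i ranges over
  the ring Z_17, realised as the finite type 17 (residue 0 plays the role of 17).\<close>

datatype letter = La | Lb | Lc | Ld | Le | Lf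

type_synonym vert = "17 \<times> letter"

definition bs_edge :: "vert \<Rightarrow> vert \<Rightarrow> bool" where
  "bs_edge u v \<longleftrightarrow>
     (fst v = fst u \<and>
        ((snd u = Le \<and> snd v \<in> {La, Lb, Lf}) \<or> (snd u = Lf \<and> snd v \<in> {Lc, Ld})))
   \<or> (snd u = snd v \<and>
        ((snd u = La \<and> fst v = fst u + 1) \<or>
         (snd u = Lb \<and> fst v = fst u + 4) \<or>
         (snd u = Lc \<and> fst v = fst u + 2) \<or>
         (snd u = Ld \<and> fst v = fst u + 8)))"

definition bs_adj :: "vert \<Rightarrow> vert \<Rightarrow> bool" where
  "bs_adj u v \<longleftrightarrow> bs_edge u v \<or> bs_edge v u"

definition bs_aut :: "(vert \<Rightarrow> vert) \<Rightarrow> bool" where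
  "bs_aut \<sigma> \<longleftrightarrow> bij \<sigma> \<and> (\<forall>u v. bs_adj u v \<longleftrightarrow> bs_adj (\<sigma> u) (\<sigma> v))"

definition part :: "letter \<Rightarrow> vert set" where
  "part t = UNIV \<times> {t}"

definition H :: "17 \<Rightarrow> vert set" where
  "H i = {i} \<times> UNIV"

definition pp_aut :: "(vert \<Rightarrow> vert) \<Rightarrow> bool" where
  "pp_aut \<sigma> \<longleftrightarrow> bs_aut \<sigma> \<and> (\<forall>t. \<exists>s. \<sigma> ` part t = part s)"

definition hperm :: "(vert \<Rightarrow> vert) \<Rightarrow> (17 \<Rightarrow> 17)" where
  "hperm \<sigma> = (THE \<pi>. \<forall>i. \<sigma> ` H i = H (\<pi> i))"

definition D17 :: "(17 \<Rightarrow> 17) set" where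
  "D17 = {\<alpha>. \<exists>s c. (s = 1 \<or> s = -1) \<and> \<alpha> = (\<lambda>i. s * i + c)}"

definition phi :: "nat \<Rightarrow> 17 \<Rightarrow> 17" where
  "phi k = (\<lambda>i. of_nat k * i)"

definition Kset :: "nat set" where
  "Kset = {1, 2, 4, 8}"

definition DPhi :: "(17 \<Rightarrow> 17) set" where
  "DPhi = {\<alpha> \<circ> phi k | \<alpha> k. \<alpha> \<in> D17 \<and> k \<in> Kset}"

end

theory Submission
  imports Defs
begin

definition cyc :: "letter \<Rightarrow> bool" where "cyc t \<longleftrightarrow> t \<in> {La, Lb, Lc, Ld}"

fun stp :: "letter \<Rightarrow> 17" where
  "stp La = 1" | "stp Lb = 4" | "stp Lc = 2" | "stp Ld = 8" | "stp Le = 0" | "stp Lf = 0"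

definition hedge :: "letter \<Rightarrow> letter \<Rightarrow> bool" where
  "hedge t u \<longleftrightarrow> (t = Le \<and> u \<in> {La, Lb, Lf}) \<or> (t = Lf \<and> u \<in> {Lc, Ld})
     \<or> (u = Le \<and> t \<in> {La, Lb, Lf}) \<or> (u = Lf \<and> t \<in> {Lc, Ld})"

lemma hedge_irrefl[simp]: "\<not> hedge t t"
  by (cases t) (auto simp: hedge_def)

lemma adj_char: "bs_adj (i, t) (j, u) \<longleftrightarrow>
   (i = j \<and> hedge t u) \<or> (t = u \<and> cyc t \<and> (j = i + stp t \<or> i = j + stp t))"
  by (cases t; cases u) (auto simp: bs_adj_def bs_edge_def hedge_def cyc_def)

fun tau4 :: "letter \<Rightarrow> letter" where
  "tau4 La = Lb" | "tau4 Lb = La" | "tau4 Lc = Ld" | "tau4 Ld = Lc" | "tau4 Le = Le" | "tau4 Lf = Lf"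
fun tau2 :: "letter \<Rightarrow> letter" where
  "tau2 La = Lc" | "tau2 Lb = Ld" | "tau2 Lc = Lb" | "tau2 Ld = La" | "tau2 Le = Lf" | "tau2 Lf = Le"
fun tau8 :: "letter \<Rightarrow> letter" where
  "tau8 La = Ld" | "tau8 Lb = Lc" | "tau8 Lc = La" | "tau8 Ld = Lb" | "tau8 Le = Lf" | "tau8 Lf = Le"

definition tau :: "nat \<Rightarrow> letter \<Rightarrow> letter" where
  "tau k = (if k = 1 then id else if k = 4 then tau4 else if k = 2 then tau2 else tau8)"

lemma Kset_cases: "k \<in> Kset \<Longrightarrow> k = 1 \<or> k = 2 \<or> k = 4 \<or> k = 8"
  by (auto simp: Kset_def)

lemma fc1:
  assumes "e = 1 \<or> e = -1" "k \<in> Kset" "cyc t" "cyc u"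
    "e * of_nat k * stp t = stp u \<or> e * of_nat k * stp t = - stp u"
  shows "u = tau k t"
  using assms(1) Kset_cases[OF assms(2)] assms(3-5)
  by (elim disjE; cases t; cases u; simp add: cyc_def tau_def)

lemma fc2:
  assumes "e = 1 \<or> e = -1" "k \<in> Kset" "cyc t"
  shows "cyc (tau k t) \<and> (e * of_nat k * stp t = stp (tau k t) \<or> e * of_nat k * stp t = - stp (tau k t))"
  using assms(1) Kset_cases[OF assms(2)] assms(3)
  by (elim disjE; cases t; simp add: cyc_def tau_def)

lemma fc3: "k \<in> Kset \<Longrightarrow> hedge (tau k t) (tau k u) \<longleftrightarrow> hedge t u"
  by (drule Kset_cases) (elim disjE; cases t; cases u; simp add: hedge_def tau_def)

lemma fc4: "k \<in> Kset \<Longrightarrow> tau k t = tau k u \<longleftrightarrow> t = u"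
  by (drule Kset_cases) (elim disjE; cases t; cases u; simp add: tau_def)

definition kinv :: "nat \<Rightarrow> nat" where "kinv k = (if k = 2 then 8 else if k = 8 then 2 else k)"

lemma fc6: "k \<in> Kset \<Longrightarrow> tau k (tau (kinv k) u) = u \<and> tau (kinv k) (tau k u) = u \<and> kinv k \<in> Kset"
  by (drule Kset_cases) (elim disjE; cases u; simp add: tau_def kinv_def Kset_def)

lemma fc5:
  assumes "inj \<tau>" "k \<in> Kset" "\<forall>t. cyc t \<longrightarrow> \<tau> t = tau k t" "hedge (\<tau> Le) (\<tau> La)"
  shows "\<tau> t = tau k t"
proof -
  have ne: "\<tau> x \<noteq> \<tau> y" if "x \<noteq> y" for x y using assms(1) that by (auto dest: injD)
  have a: "\<tau> La = tau k La" "\<tau> Lb = tau k Lb" "\<tau> Lc = tau k Lc" "\<tau> Ld = tau k Ld"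
    using assms(3) by (auto simp: cyc_def)
  have e1: "\<tau> Le \<noteq> \<tau> La" "\<tau> Le \<noteq> \<tau> Lb" "\<tau> Le \<noteq> \<tau> Lc" "\<tau> Le \<noteq> \<tau> Ld" "\<tau> Le \<noteq> \<tau> Lf"
    "\<tau> Lf \<noteq> \<tau> La" "\<tau> Lf \<noteq> \<tau> Lb" "\<tau> Lf \<noteq> \<tau> Lc" "\<tau> Lf \<noteq> \<tau> Ld"
    by (simp_all add: inj_eq[OF assms(1)])
  have le1: "\<tau> Le = Le \<or> \<tau> Le = Lf"
    using Kset_cases[OF assms(2)] a e1
    by (elim disjE; cases "\<tau> Le"; simp add: tau_def)
  have le2: "\<tau> Lf = Le \<or> \<tau> Lf = Lf"
    using Kset_cases[OF assms(2)] a e1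
    by (elim disjE; cases "\<tau> Lf"; simp add: tau_def)
  note le = le1 le2
  have "\<tau> Le = tau k Le"
    using Kset_cases[OF assms(2)] a le(1) assms(4)
    by (elim disjE; simp add: tau_def hedge_def)
  moreover have "\<tau> Lf = tau k Lf"
    using Kset_cases[OF assms(2)] le calculation e1(5)
    by (elim disjE; simp add: tau_def; metis)
  ultimately show ?thesis using a by (cases t) auto
qed

lemma fc7:
  assumes "e = 1 \<or> e = -1" "k \<in> Kset"
  shows "\<exists>w. w * (e * of_nat k) = (1::17)"
  using assms(1) Kset_cases[OF assms(2)]
  apply (elim disjE)
  apply (rule exI[of _ 1]; simp)
  apply (rule exI[of _ 9]; simp)
  apply (rule exI[of _ 13]; simp)
  apply (rule exI[of _ 15]; simp)
  apply (rule exI[of _ "-1"]; simp)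
  apply (rule exI[of _ "-9"]; simp)
  apply (rule exI[of _ "-13"]; simp)
  apply (rule exI[of _ "-15"]; simp)
  done

lemma fc8:
  assumes "e = 1 \<or> e = -1" "k \<in> Kset" "e' = 1 \<or> e' = -1" "k' \<in> Kset"
    "e * of_nat k = (e' * of_nat k' :: 17)"
  shows "e = e' \<and> k = k'"
  using assms(1) Kset_cases[OF assms(2)] assms(3) Kset_cases[OF assms(4)] assms(5)
  by (elim disjE; simp)

lemma ind17:
  assumes "P 0" "\<And>i. P i \<Longrightarrow> P (i + 1)"
  shows "P (x::17)"
proof (induct x rule: bit1_induct)
  case (of_int z)
  from \<open>0 \<le> z\<close> show ?case
  proof (induct z rule: int_ge_induct)
    case base then show ?case using assms(1) by simp
  next
    case (step i) then show ?case using assms(2)[of "of_int i"] by simp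
  qed
qed


lemma lin:
  fixes \<pi> :: "17 \<Rightarrow> 17"
  assumes inj: "inj \<pi>" and st: "\<And>i. \<pi> (i + 1) = \<pi> i + s \<or> \<pi> i = \<pi> (i + 1) + s"
  shows "\<exists>e. (e = 1 \<or> e = -1) \<and> (\<forall>i. \<pi> i = e * s * i + \<pi> 0)"
proof -
  have two: "i \<noteq> i + 1 + 1" for i :: 17
  proof
    assume "i = i + 1 + 1" then have "(0::17) = 2" by (simp add: algebra_simps)
    then show False by simp
  qed
  have g: "(\<pi> (i + 1) = \<pi> i + s) \<longleftrightarrow> (\<pi> (i + 1 + 1) = \<pi> (i + 1) + s)" for i
  proof
    assume a: "\<pi> (i + 1) = \<pi> i + s"
    show "\<pi> (i + 1 + 1) = \<pi> (i + 1) + s"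
    proof (rule ccontr)
      assume "\<pi> (i + 1 + 1) \<noteq> \<pi> (i + 1) + s"
      then have "\<pi> (i + 1) = \<pi> (i + 1 + 1) + s" using st[of "i+1"] by auto
      then have "\<pi> i = \<pi> (i + 1 + 1)" using a by simp
      then show False using injD[OF inj] two by metis
    qed
  next
    assume a: "\<pi> (i + 1 + 1) = \<pi> (i + 1) + s"
    show "\<pi> (i + 1) = \<pi> i + s"
    proof (rule ccontr)
      assume "\<pi> (i + 1) \<noteq> \<pi> i + s"
      then have "\<pi> i = \<pi> (i + 1) + s" using st[of i] by auto
      then have "\<pi> i = \<pi> (i + 1 + 1)" using a by simp
      then show False using injD[OF inj] two by metis
    qed
  qed
  have gall: "(\<pi> (i + 1) = \<pi> i + s) \<longleftrightarrow> (\<pi> (0 + 1) = \<pi> 0 + s)" for i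
  proof (induct i rule: ind17)
    case 1 then show ?case by simp
  next
    case (2 i) then show ?case using g[of i] by blast
  qed
  show ?thesis
  proof (cases "\<pi> (0 + 1) = \<pi> 0 + s")
    case True
    have h: "\<pi> (i + 1) = \<pi> i + s" for i using gall[of i] True by blast
    have "\<pi> i = 1 * s * i + \<pi> 0" for i
    proof (induct i rule: ind17)
      case 1 show ?case by simp
    next
      case (2 i)
      have "\<pi> (i + 1) = \<pi> i + s" by (rule h)
      also have "\<dots> = 1 * s * i + \<pi> 0 + s" using 2 by simp
      finally show ?case by (simp add: algebra_simps)
    qed
    then show ?thesis by blast
  next
    case False
    have h: "\<pi> i = \<pi> (i + 1) + s" for i using gall[of i] False st[of i] by blast
    have "\<pi> i = (-1) * s * i + \<pi> 0" for i
    proof (induct i rule: ind17)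
      case 1 show ?case by simp
    next
      case (2 i)
      have "\<pi> (i + 1) = \<pi> i - s" using h[of i] by (simp add: algebra_simps)
      also have "\<dots> = (-1) * s * i + \<pi> 0 - s" using 2 by simp
      finally show ?case by (simp add: algebra_simps)
    qed
    then show ?thesis by blast
  qed
qed

definition sg :: "17 \<Rightarrow> nat \<Rightarrow> 17 \<Rightarrow> vert \<Rightarrow> vert" where
  "sg e k c v = (e * of_nat k * fst v + c, tau k (snd v))"

lemma canc: "w * m = (1::17) \<Longrightarrow> m * a = m * b \<longleftrightarrow> a = b"
  by (metis mult.assoc mult_1)

lemma fwd:
  assumes "pp_aut \<sigma>"
  shows "\<exists>e k c. (e = 1 \<or> e = -1) \<and> k \<in> Kset \<and> \<sigma> = sg e k c"
proof -
  have bij: "bij \<sigma>" and adj: "\<And>u v. bs_adj u v \<longleftrightarrow> bs_adj (\<sigma> u) (\<sigma> v)"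
    and pp: "\<forall>t. \<exists>s. \<sigma> ` part t = part s"
    using assms by (auto simp: pp_aut_def bs_aut_def)
  obtain \<tau> where \<tau>: "\<And>t. \<sigma> ` part t = part (\<tau> t)" using pp by metis
  have sndt: "snd (\<sigma> (i, t)) = \<tau> t" for i t
  proof -
    have "(i, t) \<in> part t" by (simp add: part_def)
    then have "\<sigma> (i, t) \<in> part (\<tau> t)" using \<tau>[of t] by blast
    then show ?thesis by (auto simp: part_def)
  qed
  have injs: "inj \<sigma>" using bij bij_is_inj by blast
  have injt: "inj \<tau>"
  proof (rule injI)
    fix t u assume "\<tau> t = \<tau> u"
    then have "\<sigma> ` part t = \<sigma> ` part u" using \<tau> by simp
    then have "part t = part u" using injs by (simp add: inj_image_eq_iff)
    then show "t = u" by (auto simp: part_def)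
  qed
  define f where "f t i = fst (\<sigma> (i, t))" for t i
  have seq: "\<sigma> (i, t) = (f t i, \<tau> t)" for i t
    using sndt[of i t] by (simp add: f_def prod_eq_iff)
  have hf: "f t i = f u i" if "hedge t u" for t u i
  proof -
    have "bs_adj (i, t) (i, u)" using that by (simp add: adj_char)
    then have "bs_adj (f t i, \<tau> t) (f u i, \<tau> u)" using adj seq by metis
    moreover have "t \<noteq> u" using that by auto
    then have "\<tau> t \<noteq> \<tau> u" using injt by (simp add: inj_eq)
    ultimately show ?thesis by (simp add: adj_char)
  qed
  define \<pi> where "\<pi> i = f La i" for i
  have fall: "f t i = \<pi> i" for t i
  proof -
    have "f La i = f Le i" "f Lb i = f Le i" "f Lf i = f Le i" "f Lc i = f Lf i" "f Ld i = f Lf i"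
      by (rule hf; simp add: hedge_def)+
    then show ?thesis by (cases t) (simp_all add: \<pi>_def)
  qed
  have seq2: "\<sigma> (i, t) = (\<pi> i, \<tau> t)" for i t using seq fall by simp
  have injp: "inj \<pi>"
  proof (rule injI)
    fix i j assume "\<pi> i = \<pi> j"
    then have "\<sigma> (i, La) = \<sigma> (j, La)" using seq2 by simp
    then show "i = j" using injD[OF injs] by blast
  qed
  have cycs: "cyc (\<tau> t) \<and> (\<pi> (i + stp t) = \<pi> i + stp (\<tau> t) \<or> \<pi> i = \<pi> (i + stp t) + stp (\<tau> t))"
    if "cyc t" for t i
  proof -
    have "bs_adj (i, t) (i + stp t, t)" using that by (simp add: adj_char)
    then have "bs_adj (\<pi> i, \<tau> t) (\<pi> (i + stp t), \<tau> t)" using adj seq2 by metis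
    then show ?thesis by (simp add: adj_char)
  qed
  have ca: "cyc (\<tau> La)" using cycs[of La 0] by (simp add: cyc_def)
  have "\<exists>k\<in>Kset. (of_nat k :: 17) = stp (\<tau> La)"
    using ca by (cases "\<tau> La"; simp add: cyc_def Kset_def)
  then obtain k where k: "k \<in> Kset" "of_nat k = stp (\<tau> La)" by blast
  have "\<pi> (i + 1) = \<pi> i + of_nat k \<or> \<pi> i = \<pi> (i + 1) + of_nat k" for i
    using cycs[of La i] k by (simp add: cyc_def)
  from lin[OF injp this] obtain e where e: "e = 1 \<or> e = -1" "\<And>i. \<pi> i = e * of_nat k * i + \<pi> 0"
    by blast
  define c where "c = \<pi> 0"
  have pc: "\<pi> i = e * of_nat k * i + c" for i unfolding c_def by (rule e(2))
  have tc: "\<forall>t. cyc t \<longrightarrow> \<tau> t = tau k t"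
  proof (intro allI impI)
    fix t assume t: "cyc t"
    from cycs[OF t, of 0] have "cyc (\<tau> t)"
      "e * of_nat k * stp t + c = c + stp (\<tau> t) \<or> c = e * of_nat k * stp t + c + stp (\<tau> t)"
      by (simp_all only: pc) simp_all
    then have "e * of_nat k * stp t = stp (\<tau> t) \<or> e * of_nat k * stp t = - stp (\<tau> t)"
      apply (elim disjE)
       apply (rule disjI1, simp add: add.commute)
      apply (rule disjI2)
      apply (simp add: eq_neg_iff_add_eq_0)
      done
    then show "\<tau> t = tau k t" using fc1[OF e(1) k(1) t] \<open>cyc (\<tau> t)\<close> by blast
  qed
  have "hedge (\<tau> Le) (\<tau> La)"
  proof -
    have "bs_adj (0, Le) (0, La)" by (simp add: adj_char hedge_def)
    then have "bs_adj (\<pi> 0, \<tau> Le) (\<pi> 0, \<tau> La)" using adj seq2 by metis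
    moreover have "\<tau> Le \<noteq> \<tau> La" using injt by (simp add: inj_eq)
    ultimately show ?thesis by (simp add: adj_char)
  qed
  from fc5[OF injt k(1) tc this] have tt: "\<tau> t = tau k t" for t .
  have "\<sigma> = sg e k c"
  proof
    fix v show "\<sigma> v = sg e k c v"
      using seq2[of "fst v" "snd v"] pc[of "fst v"] tt[of "snd v"] by (simp add: sg_def)
  qed
  then show ?thesis using e(1) k(1) by blast
qed


lemma fcyc: "k \<in> Kset \<Longrightarrow> cyc (tau k t) \<longleftrightarrow> cyc t"
  by (drule Kset_cases) (elim disjE; cases t; simp add: tau_def cyc_def)

lemma aff1: "w * m = (1::17) \<Longrightarrow> (m * j + c = m * i + c + m * x) \<longleftrightarrow> j = i + x"
proof -
  assume w: "w * m = 1"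
  have "(m * j + c = m * i + c + m * x) \<longleftrightarrow> m * j = m * (i + x)" by (simp add: algebra_simps)
  also have "\<dots> \<longleftrightarrow> j = i + x" by (rule canc[OF w])
  finally show ?thesis .
qed

lemma aff2: "w * m = (1::17) \<Longrightarrow> (m * j + c = m * i + c + - (m * x)) \<longleftrightarrow> i = j + x"
proof -
  assume w: "w * m = 1"
  have "(m * j + c = m * i + c + - (m * x)) \<longleftrightarrow> m * (j + x) = m * i" by (auto simp: algebra_simps)
  also have "\<dots> \<longleftrightarrow> j + x = i" by (rule canc[OF w])
  finally show ?thesis by auto
qed

lemma sg_adj:
  assumes e: "e = 1 \<or> e = -1" and k: "k \<in> Kset"
  shows "bs_adj (sg e k c u) (sg e k c v) \<longleftrightarrow> bs_adj u v"
proof -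
  define m where "m = e * of_nat k"
  obtain w where w: "w * m = 1" using fc7[OF e k] by (auto simp: m_def)
  obtain i t where u: "u = (i, t)" by (cases u)
  obtain j t' where v: "v = (j, t')" by (cases v)
  have s: "sg e k c (a, b) = (m * a + c, tau k b)" for a b by (simp add: sg_def m_def)
  have A: "(m * i + c = m * j + c) \<longleftrightarrow> i = j" using canc[OF w] by simp
  have key: "(m * j + c = m * i + c + stp (tau k t) \<or> m * i + c = m * j + c + stp (tau k t))
      \<longleftrightarrow> (j = i + stp t \<or> i = j + stp t)" if "cyc t"
  proof -
    from fc2[OF e k that] have "m * stp t = stp (tau k t) \<or> m * stp t = - stp (tau k t)"
      by (simp add: m_def)
    then show ?thesis
    proof
      assume h: "m * stp t = stp (tau k t)"
      show ?thesis unfolding h[symmetric] aff1[OF w] by blast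
    next
      assume h: "m * stp t = - stp (tau k t)"
      then have h': "stp (tau k t) = - (m * stp t)" by simp
      show ?thesis unfolding h' aff2[OF w] by blast
    qed
  qed
  show ?thesis
    unfolding u v s adj_char A fc4[OF k] fc3[OF k] fcyc[OF k]
    using key by blast
qed

lemma sg_pp:
  assumes e: "e = 1 \<or> e = -1" and k: "k \<in> Kset"
  shows "pp_aut (sg e k c)"
    and "\<And>t. sg e k c ` part t = part (tau k t)"
    and "\<And>i. sg e k c ` H i = H (e * of_nat k * i + c)"
proof -
  define m where "m = e * of_nat k"
  obtain w where w: "w * m = 1" using fc7[OF e k] by (auto simp: m_def)
  have w': "m * w = 1" using w by (simp add: mult.commute)
  have s: "sg e k c (a, b) = (m * a + c, tau k b)" for a b by (simp add: sg_def m_def)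
  define g where "g v = (w * (fst v - c), tau (kinv k) (snd v))" for v
  have i1: "g \<circ> sg e k c = id"
  proof
    fix v show "(g \<circ> sg e k c) v = id v"
      using fc6[OF k] w by (cases v) (simp add: s g_def mult.assoc[symmetric])
  qed
  have i2: "sg e k c \<circ> g = id"
  proof
    fix v show "(sg e k c \<circ> g) v = id v"
      using fc6[OF k] w' by (cases v) (simp add: s g_def mult.assoc[symmetric])
  qed
  have bij: "bij (sg e k c)" by (rule o_bij[OF i1 i2])
  have P: "sg e k c ` part t = part (tau k t)" for t
  proof
    show "sg e k c ` part t \<subseteq> part (tau k t)" by (auto simp: part_def s)
    show "part (tau k t) \<subseteq> sg e k c ` part t"
    proof
      fix v assume "v \<in> part (tau k t)"
      then obtain j where v: "v = (j, tau k t)" by (auto simp: part_def)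
      have "v = sg e k c (w * (j - c), t)" using w' by (simp add: s v mult.assoc[symmetric])
      then show "v \<in> sg e k c ` part t" by (auto simp: part_def)
    qed
  qed
  show "sg e k c ` H i = H (e * of_nat k * i + c)" for i
  proof
    show "sg e k c ` H i \<subseteq> H (e * of_nat k * i + c)" by (auto simp: H_def s m_def)
    show "H (e * of_nat k * i + c) \<subseteq> sg e k c ` H i"
    proof
      fix v assume "v \<in> H (e * of_nat k * i + c)"
      then obtain b where v: "v = (e * of_nat k * i + c, b)" by (auto simp: H_def)
      have "v = sg e k c (i, tau (kinv k) b)" using fc6[OF k] by (simp add: s v m_def)
      then show "v \<in> sg e k c ` H i" by (auto simp: H_def)
    qed
  qed
  show "sg e k c ` part t = part (tau k t)" for t by (rule P)
  show "pp_aut (sg e k c)"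
    unfolding pp_aut_def bs_aut_def using bij sg_adj[OF e k] P by metis
qed

lemma H_inj: "H a = H b \<Longrightarrow> a = b"
  by (auto simp: H_def)

lemma hperm_sg:
  assumes e: "e = 1 \<or> e = -1" and k: "k \<in> Kset"
  shows "hperm (sg e k c) = (\<lambda>i. e * of_nat k * i + c)"
  unfolding hperm_def
proof (rule the_equality)
  show "\<forall>i. sg e k c ` H i = H (e * of_nat k * i + c)" using sg_pp(3)[OF e k] by blast
  fix \<pi> assume "\<forall>i. sg e k c ` H i = H (\<pi> i)"
  then show "\<pi> = (\<lambda>i. e * of_nat k * i + c)" using sg_pp(3)[OF e k] H_inj by (metis ext)
qed


lemma aff_bij:
  fixes e c :: 17
  assumes e: "e = 1 \<or> e = -1" and k: "k \<in> Kset"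
  shows "bij (\<lambda>i. e * of_nat k * i + c)"
proof -
  define m where "m = e * of_nat k"
  obtain w where w: "w * m = 1" using fc7[OF e k] by (auto simp: m_def)
  have w': "m * w = 1" using w by (simp add: mult.commute)
  have "bij (\<lambda>i. m * i + c)"
  proof (rule o_bij[where g = "\<lambda>j. w * (j - c)"])
    show "(\<lambda>j. w * (j - c)) \<circ> (\<lambda>i. m * i + c) = id"
      using w by (auto simp: fun_eq_iff mult.assoc[symmetric])
    show "(\<lambda>i. m * i + c) \<circ> (\<lambda>j. w * (j - c)) = id"
      using w' by (auto simp: fun_eq_iff mult.assoc[symmetric])
  qed
  then show ?thesis by (simp add: m_def)
qed

lemma D17E: "\<alpha> \<in> D17 \<Longrightarrow> \<exists>s c. (s = 1 \<or> s = -1) \<and> \<alpha> = (\<lambda>i. s * i + c)"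
  by (auto simp: D17_def)

lemma comp_phi: "(\<lambda>i. s * i + c) \<circ> phi k = (\<lambda>i. s * of_nat k * i + c)"
  by (auto simp: phi_def fun_eq_iff mult.assoc)

lemma uniq:
  assumes "e = 1 \<or> e = -1" "k \<in> Kset" "e' = 1 \<or> e' = -1" "k' \<in> Kset"
    "(\<lambda>i. e * of_nat k * i + c) = (\<lambda>i::17. e' * of_nat k' * i + c')"
  shows "e = e' \<and> k = k' \<and> c = c'"
proof -
  have c: "c = c'" using fun_cong[OF assms(5), of 0] by simp
  have "e * of_nat k = e' * of_nat k'" using fun_cong[OF assms(5), of 1] c by simp
  with fc8[OF assms(1-4)] c show ?thesis by blast
qed

theorem propositionA1:
  shows "(\<forall>\<sigma>. pp_aut \<sigma> \<longrightarrow> (\<exists>!\<pi>. bij \<pi> \<and> (\<forall>i. \<sigma> ` H i = H (\<pi> i))))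
    \<and> bij_betw hperm {\<sigma>. pp_aut \<sigma>} DPhi
    \<and> (\<forall>\<pi>\<in>DPhi. \<exists>!(\<alpha>, k). \<alpha> \<in> D17 \<and> k \<in> Kset \<and> \<pi> = \<alpha> \<circ> phi k)
    \<and> (\<forall>\<sigma> \<alpha> k. pp_aut \<sigma> \<and> \<alpha> \<in> D17 \<and> k \<in> Kset \<and> hperm \<sigma> = \<alpha> \<circ> phi k \<longrightarrow>
         (k = 1 \<longrightarrow> (\<forall>t. \<sigma> ` part t = part t))
       \<and> (k = 4 \<longrightarrow> \<sigma> ` part La = part Lb \<and> \<sigma> ` part Lb = part La
                  \<and> \<sigma> ` part Lc = part Ld \<and> \<sigma> ` part Ld = part Lc
                  \<and> \<sigma> ` part Le = part Le \<and> \<sigma> ` part Lf = part Lf)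
       \<and> (k \<in> {2, 8} \<longrightarrow> \<sigma> ` part Le = part Lf \<and> \<sigma> ` part Lf = part Le
                  \<and> \<sigma> ` (part La \<union> part Lb) = part Lc \<union> part Ld
                  \<and> \<sigma> ` (part Lc \<union> part Ld) = part La \<union> part Lb))"
proof (intro conjI)
  show "\<forall>\<sigma>. pp_aut \<sigma> \<longrightarrow> (\<exists>!\<pi>. bij \<pi> \<and> (\<forall>i. \<sigma> ` H i = H (\<pi> i)))"
  proof (intro allI impI)
    fix \<sigma> assume "pp_aut \<sigma>"
    then obtain e k c where ekc: "e = 1 \<or> e = -1" "k \<in> Kset" "\<sigma> = sg e k c" using fwd by blast
    show "\<exists>!\<pi>. bij \<pi> \<and> (\<forall>i. \<sigma> ` H i = H (\<pi> i))"
    proof (rule ex1I[where a = "\<lambda>i. e * of_nat k * i + c"])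
      show "bij (\<lambda>i. e * of_nat k * i + c) \<and> (\<forall>i. \<sigma> ` H i = H (e * of_nat k * i + c))"
        using aff_bij[OF ekc(1,2)] sg_pp(3)[OF ekc(1,2)] ekc(3) by blast
      fix \<pi> assume "bij \<pi> \<and> (\<forall>i. \<sigma> ` H i = H (\<pi> i))"
      then show "\<pi> = (\<lambda>i. e * of_nat k * i + c)"
        using sg_pp(3)[OF ekc(1,2)] ekc(3) H_inj by (metis ext)
    qed
  qed
next
  show "bij_betw hperm {\<sigma>. pp_aut \<sigma>} DPhi"
    unfolding bij_betw_def
  proof
    show "inj_on hperm {\<sigma>. pp_aut \<sigma>}"
    proof (rule inj_onI)
      fix \<sigma>1 \<sigma>2 assume "\<sigma>1 \<in> {\<sigma>. pp_aut \<sigma>}" "\<sigma>2 \<in> {\<sigma>. pp_aut \<sigma>}" and h: "hperm \<sigma>1 = hperm \<sigma>2"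
      then obtain e1 k1 c1 e2 k2 c2 where
        a: "e1 = 1 \<or> e1 = -1" "k1 \<in> Kset" "\<sigma>1 = sg e1 k1 c1"
           "e2 = 1 \<or> e2 = -1" "k2 \<in> Kset" "\<sigma>2 = sg e2 k2 c2"
        using fwd by (metis mem_Collect_eq)
      have "(\<lambda>i. e1 * of_nat k1 * i + c1) = (\<lambda>i. e2 * of_nat k2 * i + c2)"
        using h hperm_sg[OF a(1,2)] hperm_sg[OF a(4,5)] a(3,6) by simp
      from uniq[OF a(1,2,4,5) this] a(3,6) show "\<sigma>1 = \<sigma>2" by simp
    qed
    show "hperm ` {\<sigma>. pp_aut \<sigma>} = DPhi"
    proof
      show "hperm ` {\<sigma>. pp_aut \<sigma>} \<subseteq> DPhi"
      proof
        fix \<pi> assume "\<pi> \<in> hperm ` {\<sigma>. pp_aut \<sigma>}"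
        then obtain \<sigma> where "pp_aut \<sigma>" "\<pi> = hperm \<sigma>" by blast
        then obtain e k c where ekc: "e = 1 \<or> e = -1" "k \<in> Kset" "\<pi> = hperm (sg e k c)"
          using fwd by blast
        have "\<pi> = (\<lambda>i. e * i + c) \<circ> phi k" using hperm_sg[OF ekc(1,2)] ekc(3) comp_phi by simp
        moreover have "(\<lambda>i. e * i + c) \<in> D17" using ekc(1) by (auto simp: D17_def)
        ultimately show "\<pi> \<in> DPhi" using ekc(2) by (auto simp: DPhi_def)
      qed
      show "DPhi \<subseteq> hperm ` {\<sigma>. pp_aut \<sigma>}"
      proof
        fix \<pi> assume "\<pi> \<in> DPhi"
        then obtain \<alpha> k where ak: "\<alpha> \<in> D17" "k \<in> Kset" "\<pi> = \<alpha> \<circ> phi k" by (auto simp: DPhi_def)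
        obtain e c where ec: "e = 1 \<or> e = -1" "\<alpha> = (\<lambda>i. e * i + c)" using D17E[OF ak(1)] by blast
        have "\<pi> = hperm (sg e k c)" using ak(3) ec(2) comp_phi hperm_sg[OF ec(1) ak(2)] by simp
        then show "\<pi> \<in> hperm ` {\<sigma>. pp_aut \<sigma>}" using sg_pp(1)[OF ec(1) ak(2)] by blast
      qed
    qed
  qed
next
  show "\<forall>\<pi>\<in>DPhi. \<exists>!(\<alpha>, k). \<alpha> \<in> D17 \<and> k \<in> Kset \<and> \<pi> = \<alpha> \<circ> phi k"
  proof
    fix \<pi> assume "\<pi> \<in> DPhi"
    then obtain \<alpha> k where ak: "\<alpha> \<in> D17" "k \<in> Kset" "\<pi> = \<alpha> \<circ> phi k" by (auto simp: DPhi_def)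
    show "\<exists>!(\<alpha>, k). \<alpha> \<in> D17 \<and> k \<in> Kset \<and> \<pi> = \<alpha> \<circ> phi k"
    proof (rule ex1I[where a = "(\<alpha>, k)"])
      show "case (\<alpha>, k) of (\<alpha>, k) \<Rightarrow> \<alpha> \<in> D17 \<and> k \<in> Kset \<and> \<pi> = \<alpha> \<circ> phi k" using ak by simp
      fix x assume "case x of (\<beta>, m) \<Rightarrow> \<beta> \<in> D17 \<and> m \<in> Kset \<and> \<pi> = \<beta> \<circ> phi m"
      then obtain \<beta> m where x: "x = (\<beta>, m)" "\<beta> \<in> D17" "m \<in> Kset" "\<pi> = \<beta> \<circ> phi m"
        by (cases x) auto
      obtain e c where ec: "e = 1 \<or> e = -1" "\<alpha> = (\<lambda>i. e * i + c)" using D17E[OF ak(1)] by blast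
      obtain e' c' where ec': "e' = 1 \<or> e' = -1" "\<beta> = (\<lambda>i. e' * i + c')" using D17E[OF x(2)] by blast
      have "(\<lambda>i. e * of_nat k * i + c) = (\<lambda>i. e' * of_nat m * i + c')"
        using ak(3) x(4) ec(2) ec'(2) comp_phi by metis
      from uniq[OF ec(1) ak(2) ec'(1) x(3) this] show "x = (\<alpha>, k)" using x(1) ec(2) ec'(2) by simp
    qed
  qed
next
  show "\<forall>\<sigma> \<alpha> k. pp_aut \<sigma> \<and> \<alpha> \<in> D17 \<and> k \<in> Kset \<and> hperm \<sigma> = \<alpha> \<circ> phi k \<longrightarrow>
         (k = 1 \<longrightarrow> (\<forall>t. \<sigma> ` part t = part t))
       \<and> (k = 4 \<longrightarrow> \<sigma> ` part La = part Lb \<and> \<sigma> ` part Lb = part La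
                  \<and> \<sigma> ` part Lc = part Ld \<and> \<sigma> ` part Ld = part Lc
                  \<and> \<sigma> ` part Le = part Le \<and> \<sigma> ` part Lf = part Lf)
       \<and> (k \<in> {2, 8} \<longrightarrow> \<sigma> ` part Le = part Lf \<and> \<sigma> ` part Lf = part Le
                  \<and> \<sigma> ` (part La \<union> part Lb) = part Lc \<union> part Ld
                  \<and> \<sigma> ` (part Lc \<union> part Ld) = part La \<union> part Lb)"
  proof (intro allI impI)
    fix \<sigma> \<alpha> k
    assume as: "pp_aut \<sigma> \<and> \<alpha> \<in> D17 \<and> k \<in> Kset \<and> hperm \<sigma> = \<alpha> \<circ> phi k"
    then obtain e' k' c' where ekc: "e' = 1 \<or> e' = -1" "k' \<in> Kset" "\<sigma> = sg e' k' c'"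
      using fwd by blast
    obtain e c where ec: "e = 1 \<or> e = -1" "\<alpha> = (\<lambda>i. e * i + c)" using D17E as by blast
    have "(\<lambda>i. e * of_nat k * i + c) = (\<lambda>i. e' * of_nat k' * i + c')"
      using as ec(2) comp_phi hperm_sg[OF ekc(1,2)] ekc(3) by metis
    with uniq[OF ec(1) _ ekc(1,2)] as have kk: "k = k'" by blast
    have P: "\<sigma> ` part t = part (tau k t)" for t using sg_pp(2)[OF ekc(1,2)] ekc(3) kk by simp
    show "(k = 1 \<longrightarrow> (\<forall>t. \<sigma> ` part t = part t))
       \<and> (k = 4 \<longrightarrow> \<sigma> ` part La = part Lb \<and> \<sigma> ` part Lb = part La
                  \<and> \<sigma> ` part Lc = part Ld \<and> \<sigma> ` part Ld = part Lc
                  \<and> \<sigma> ` part Le = part Le \<and> \<sigma> ` part Lf = part Lf)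
       \<and> (k \<in> {2, 8} \<longrightarrow> \<sigma> ` part Le = part Lf \<and> \<sigma> ` part Lf = part Le
                  \<and> \<sigma> ` (part La \<union> part Lb) = part Lc \<union> part Ld
                  \<and> \<sigma> ` (part Lc \<union> part Ld) = part La \<union> part Lb)"
      by (auto simp: image_Un P tau_def)
  qed
qed

end
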